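(* Suppose that $X$ is a Polish space, $\langle R_{n}:n\in\mathbb{N}\rangle$ is a sequence of $F_{\sigma}$ subsets of $X\times X$, $\Gamma$ is a group of homeomorphisms of $X$, and $\mathcal{O}\subseteq X$ is a $\Gamma$-orbit such that for every $n\in\mathbb{N}$ and every open set $U\subseteq X$ intersecting $\mathcal{O}$ there are distinct $x,y\in\mathcal{O}\cap U$ with $\mathcal{O}\cap(R_{n})_{x}\cap(R_{n})_{y}=\emptyset$. Then there is a continuous injective map $\phi:2^{\omega}\to\overline{\mathcal{O}}$ such that for all $y,z\in2^{\omega}$: if $y\mathbin{\mathbb{E}_{0}}z$ then $\phi(y),\phi(z)$ lie in the same $\Gamma$-orbit, and if not $y\mathbin{\mathbb{E}_{0}}z$ then $(\phi(y),\phi(z))\notin\bigcup_{n\in\mathbb{N}}R_{n}$.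
   Context: For $R\subseteq X\times X$ and $x\in X$, $R_{x}=\{y\in X: (x,y)\in R\}$. $\mathbb{E}_{0}$ is the equivalence relation on $2^{\omega}$ given by $y\mathbin{\mathbb{E}_{0}}z$ iff there is $n$ with $y(m)=z(m)$ for all $m>n$. *)

theory Defs
  imports "HOL-Analysis.Analysis"
begin

definition E0 :: "(nat \<Rightarrow> bool) \<Rightarrow> (nat \<Rightarrow> bool) \<Rightarrow> bool" where
  "E0 y z \<longleftrightarrow> (\<exists>n. \<forall>m>n. y m = z m)"

definition homeo_group :: "('a::topological_space \<Rightarrow> 'a) set \<Rightarrow> bool" where
  "homeo_group G \<longleftrightarrow> id \<in> G \<and> (\<forall>f\<in>G. \<forall>g\<in>G. f \<circ> g \<in> G) \<and>
     (\<forall>f\<in>G. \<exists>g\<in>G. homeomorphism UNIV UNIV f g)"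

end

theory Submission
  imports Defs
begin

locale hgrp =
  fixes G :: "('a::polish_space \<Rightarrow> 'a) set" and Orb :: "'a set" and x0 :: 'a
  assumes grp: "homeo_group G" and orb: "Orb = (\<lambda>g. g x0) ` G"
begin

lemma id_in: "id \<in> G" using grp by (simp add: homeo_group_def)
lemma comp_in: "f \<in> G \<Longrightarrow> g \<in> G \<Longrightarrow> f \<circ> g \<in> G" using grp by (simp add: homeo_group_def)
lemma inv_ex: "f \<in> G \<Longrightarrow> \<exists>g\<in>G. homeomorphism UNIV UNIV f g" using grp by (simp add: homeo_group_def)

lemma inv_props:
  assumes "f \<in> G" obtains g where "g \<in> G" "\<And>x. g (f x) = x" "\<And>x. f (g x) = x"
    "continuous_on UNIV f" "continuous_on UNIV g"
proof -
  obtain g where g: "g \<in> G" "homeomorphism UNIV UNIV f g" using inv_ex[OF assms] by blast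
  show ?thesis
    apply (rule that[of g])
    using g by (simp_all add: homeomorphism_def)
qed

lemma cont: assumes "f \<in> G" shows "continuous_on UNIV f"
  using inv_props[OF assms] by metis

lemma orb_closed: assumes "f \<in> G" "x \<in> Orb" shows "f x \<in> Orb"
proof -
  obtain h where h: "h \<in> G" "x = h x0" using assms(2) orb by blast
  have "f x = (f \<circ> h) x0" using h by simp
  then show ?thesis using comp_in[OF assms(1) h(1)] orb by blast
qed

lemma orb_trans: assumes "a \<in> Orb" "b \<in> Orb" shows "\<exists>g\<in>G. g a = b"
proof -
  obtain f where f: "f \<in> G" "a = f x0" using assms orb by blast
  obtain h where h: "h \<in> G" "b = h x0" using assms orb by blast
  obtain f' where f': "f' \<in> G" "\<And>x. f' (f x) = x" using inv_props[OF f(1)] by metis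
  have "(h \<circ> f') a = b" using f f' h by simp
  then show ?thesis using comp_in[OF h(1) f'(1)] by blast
qed

lemma open_img: assumes "f \<in> G" "open A" shows "open (f ` A)"
proof -
  obtain g where g: "g \<in> G" "\<And>x. g (f x) = x" "\<And>x. f (g x) = x" "continuous_on UNIV g"
    using inv_props[OF assms(1)] by metis
  have "f ` A = g -` A"
  proof (intro set_eqI iffI)
    fix y assume "y \<in> f ` A" then obtain a where "a \<in> A" "y = f a" by blast
    then show "y \<in> g -` A" using g(2) by simp
  next
    fix y assume "y \<in> g -` A" then have "f (g y) \<in> f ` A" by blast
    then show "y \<in> f ` A" using g(3) by simp
  qed
  then show ?thesis using open_vimage[OF assms(2) g(4)] by simp
qed

lemma closed_img: assumes "f \<in> G" "closed A" shows "closed (f ` A)"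
proof -
  obtain g where g: "g \<in> G" "\<And>x. g (f x) = x" "\<And>x. f (g x) = x" "continuous_on UNIV g"
    using inv_props[OF assms(1)] by metis
  have "f ` A = g -` A"
  proof (intro set_eqI iffI)
    fix y assume "y \<in> f ` A" then obtain a where "a \<in> A" "y = f a" by blast
    then show "y \<in> g -` A" using g(2) by simp
  next
    fix y assume "y \<in> g -` A" then have "f (g y) \<in> f ` A" by blast
    then show "y \<in> f ` A" using g(3) by simp
  qed
  then show ?thesis using closed_vimage[OF assms(2) g(4)] by simp
qed

definition split :: "('a \<times> 'a) set \<Rightarrow> bool" where
  "split C \<longleftrightarrow> closed C \<and> (\<forall>U. open U \<longrightarrow> U \<inter> Orb \<noteq> {} \<longrightarrow>
      (\<exists>x y. x \<in> Orb \<inter> U \<and> y \<in> Orb \<inter> U \<and> Orb \<inter> C `` {x} \<inter> C `` {y} = {}))"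

lemma step1:
  assumes A: "open A" "A \<inter> Orb \<noteq> {}" and B: "open B" "B \<inter> Orb \<noteq> {}"
    and fg: "f \<in> G" "g \<in> G" and C: "split C"
  shows "\<exists>A' B'. open A' \<and> open B' \<and> A' \<subseteq> A \<and> B' \<subseteq> B \<and> A' \<inter> Orb \<noteq> {} \<and> B' \<inter> Orb \<noteq> {}
     \<and> (\<forall>a\<in>A'. \<forall>b\<in>B'. (f a, g b) \<notin> C)"
proof -
  obtain b where b: "b \<in> B" "b \<in> Orb" using B by auto
  obtain a0 where a0: "a0 \<in> A" "a0 \<in> Orb" using A by auto
  have U: "open (f ` A)" "f ` A \<inter> Orb \<noteq> {}" using open_img[OF fg(1) A(1)] orb_closed[OF fg(1) a0(2)] a0 by auto
  obtain x y where xy: "x \<in> Orb \<inter> f ` A" "y \<in> Orb \<inter> f ` A" "Orb \<inter> C `` {x} \<inter> C `` {y} = {}"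
    using C U unfolding split_def by blast
  have w: "g b \<in> Orb" using orb_closed[OF fg(2) b(2)] .
  have "g b \<notin> Orb \<inter> C `` {x} \<inter> C `` {y}" using xy(3) by simp
  then have "(x, g b) \<notin> C \<or> (y, g b) \<notin> C" using w by simp
  then obtain x' where x': "x' \<in> Orb \<inter> f ` A" "(x', g b) \<notin> C"
    using xy(1,2) by metis
  have "open (- C)" using C unfolding split_def by auto
  then obtain W W' where W: "open W" "open W'" "(x', g b) \<in> W \<times> W'" "W \<times> W' \<subseteq> - C"
    using x'(2) open_prod_elim[of "- C" "(x', g b)"] by (metis ComplI)
  obtain a where a: "a \<in> A" "x' = f a" using x' by auto
  obtain f' where f': "f' \<in> G" "\<And>x. f' (f x) = x" using inv_props[OF fg(1)] by metis
  have aO: "a \<in> Orb" using orb_closed[OF f'(1), of x'] x' a f' by auto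
  show ?thesis
  proof (intro exI conjI)
    show "open (A \<inter> f -` W)" using open_vimage[OF W(1) cont[OF fg(1)]] A(1) by auto
    show "open (B \<inter> g -` W')" using open_vimage[OF W(2) cont[OF fg(2)]] B(1) by auto
    show "A \<inter> f -` W \<inter> Orb \<noteq> {}" using a aO W(3) by auto
    show "B \<inter> g -` W' \<inter> Orb \<noteq> {}" using b W(3) by auto
    show "\<forall>a\<in>A \<inter> f -` W. \<forall>b\<in>B \<inter> g -` W'. (f a, g b) \<notin> C" using W(4) by auto
  qed (use a W(3) in auto)
qed

lemma step_fin:
  assumes "finite S"
    and S: "\<And>f g C sw. (f, g, C, sw) \<in> S \<Longrightarrow> f \<in> G \<and> g \<in> G \<and> split C"
    and A: "open A" "A \<inter> Orb \<noteq> {}" and B: "open B" "B \<inter> Orb \<noteq> {}"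
  shows "\<exists>A' B'. open A' \<and> open B' \<and> A' \<subseteq> A \<and> B' \<subseteq> B \<and> A' \<inter> Orb \<noteq> {} \<and> B' \<inter> Orb \<noteq> {}
     \<and> (\<forall>f g C sw. (f, g, C, sw) \<in> S \<longrightarrow> (\<forall>a\<in>A'. \<forall>b\<in>B'.
            (if sw then (f b, g a) else (f a, g b)) \<notin> C))"
  using assms(1) S
proof (induction S rule: finite_induct)
  case empty
  show ?case using A B by blast
next
  case (insert c S)
  have "\<And>f g C sw. (f, g, C, sw) \<in> S \<Longrightarrow> f \<in> G \<and> g \<in> G \<and> split C" using insert.prems by blast
  then obtain A1 B1 where AB1: "open A1" "open B1" "A1 \<subseteq> A" "B1 \<subseteq> B" "A1 \<inter> Orb \<noteq> {}" "B1 \<inter> Orb \<noteq> {}"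
     "\<forall>f g C sw. (f, g, C, sw) \<in> S \<longrightarrow> (\<forall>a\<in>A1. \<forall>b\<in>B1.
            (if sw then (f b, g a) else (f a, g b)) \<notin> C)"
    using insert.IH by metis
  obtain f g C sw where c: "c = (f, g, C, sw)" by (metis prod_cases4)
  have fgC: "f \<in> G" "g \<in> G" "split C" using insert.prems c by auto
  show ?case
  proof (cases sw)
    case True
    obtain B2 A2 where AB2: "open B2" "open A2" "B2 \<subseteq> B1" "A2 \<subseteq> A1" "B2 \<inter> Orb \<noteq> {}" "A2 \<inter> Orb \<noteq> {}"
      "\<forall>b\<in>B2. \<forall>a\<in>A2. (f b, g a) \<notin> C"
      using step1[OF AB1(2) AB1(6) AB1(1) AB1(5) fgC] by metis
    show ?thesis
    proof (intro exI conjI)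
      show "\<forall>f g C sw. (f, g, C, sw) \<in> insert c S \<longrightarrow> (\<forall>a\<in>A2. \<forall>b\<in>B2.
            (if sw then (f b, g a) else (f a, g b)) \<notin> C)"
      proof (intro allI impI)
        fix f' g' C' sw' assume "(f', g', C', sw') \<in> insert c S"
        then have "(f', g', C', sw') = c \<or> (f', g', C', sw') \<in> S" by simp
        then show "\<forall>a\<in>A2. \<forall>b\<in>B2. (if sw' then (f' b, g' a) else (f' a, g' b)) \<notin> C'"
        proof
          assume "(f', g', C', sw') = c" then show ?thesis using AB2(7) c True by auto
        next
          assume "(f', g', C', sw') \<in> S" then show ?thesis using AB1(7) AB2(3,4) by blast
        qed
      qed
    qed (use AB1 AB2 in auto)
  next
    case False
    obtain A2 B2 where AB2: "open A2" "open B2" "A2 \<subseteq> A1" "B2 \<subseteq> B1" "A2 \<inter> Orb \<noteq> {}" "B2 \<inter> Orb \<noteq> {}"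
      "\<forall>a\<in>A2. \<forall>b\<in>B2. (f a, g b) \<notin> C"
      using step1[OF AB1(1) AB1(5) AB1(2) AB1(6) fgC] by metis
    show ?thesis
    proof (intro exI conjI)
      show "\<forall>f g C sw. (f, g, C, sw) \<in> insert c S \<longrightarrow> (\<forall>a\<in>A2. \<forall>b\<in>B2.
            (if sw then (f b, g a) else (f a, g b)) \<notin> C)"
      proof (intro allI impI)
        fix f' g' C' sw' assume "(f', g', C', sw') \<in> insert c S"
        then have "(f', g', C', sw') = c \<or> (f', g', C', sw') \<in> S" by simp
        then show "\<forall>a\<in>A2. \<forall>b\<in>B2. (if sw' then (f' b, g' a) else (f' a, g' b)) \<notin> C'"
        proof
          assume "(f', g', C', sw') = c" then show ?thesis using AB2(7) c False by auto
        next
          assume "(f', g', C', sw') \<in> S" then show ?thesis using AB1(7) AB2(3,4) by blast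
        qed
      qed
    qed (use AB1 AB2 in auto)
  qed
qed

lemma unif_cont:
  assumes "finite K" "K \<subseteq> G" "e > 0"
  shows "\<exists>d>0. \<forall>k\<in>K. \<forall>u. dist u a < d \<longrightarrow> dist (k u) (k a) < e"
  using assms
proof (induction K rule: finite_induct)
  case empty then show ?case by (intro exI[of _ 1]) simp
next
  case (insert k K)
  obtain d1 where d1: "d1 > 0" "\<forall>k\<in>K. \<forall>u. dist u a < d1 \<longrightarrow> dist (k u) (k a) < e"
    using insert by blast
  have "continuous_on UNIV k" using cont insert.prems by blast
  then obtain d2 where d2: "d2 > 0" "\<forall>u. dist u a < d2 \<longrightarrow> dist (k u) (k a) < e"
    unfolding continuous_on_iff using insert.prems(2) by blast
  show ?case
    apply (rule exI[of _ "min d1 d2"])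
    using d1 d2 by auto
qed

end

primrec H :: "(nat \<Rightarrow> 'a \<Rightarrow> 'a) \<Rightarrow> nat \<Rightarrow> (nat \<Rightarrow> bool) \<Rightarrow> 'a \<Rightarrow> 'a" where
  "H g 0 y = id"
| "H g (Suc n) y = H g n y \<circ> (if y n then g n else id)"

lemma H_cong: "(\<And>k. k < n \<Longrightarrow> g k = g' k) \<Longrightarrow> (\<And>k. k < n \<Longrightarrow> y k = z k) \<Longrightarrow> H g n y = H g' n z"
  by (induction n) auto

lemma H_finite: "finite (range (\<lambda>y. H g n y))"
proof -
  have "range (\<lambda>y. H g n y) \<subseteq> (\<lambda>s. H g n (\<lambda>k. k \<in> s)) ` Pow {..<n}"
  proof
    fix h assume "h \<in> range (\<lambda>y. H g n y)"
    then obtain y where y: "h = H g n y" by blast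
    have "H g n y = H g n (\<lambda>k. k \<in> {k. k < n \<and> y k})" by (rule H_cong) auto
    then show "h \<in> (\<lambda>s. H g n (\<lambda>k. k \<in> s)) ` Pow {..<n}" using y by blast
  qed
  then show ?thesis by (rule finite_subset) simp
qed

context hgrp begin

lemma H_in: "(\<And>k. k < n \<Longrightarrow> g k \<in> G) \<Longrightarrow> H g n y \<in> G"
  by (induction n) (auto simp: id_in comp_in)

lemma stage:
  assumes gs: "\<forall>k<n. gs k \<in> G" and p: "p \<in> Orb" "r > 0" and C: "\<And>k. split (C k)"
  shows "\<exists>g p' r'. g \<in> G \<and> p' \<in> Orb \<and> r' > 0 \<and> cball p' r' \<subseteq> ball p r \<and> g ` cball p' r' \<subseteq> ball p r \<and>
   (\<forall>y z k u v. k \<le> n \<longrightarrow> u \<in> cball p' r' \<longrightarrow> v \<in> cball p' r' \<longrightarrow>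
       (H gs n y u, H gs n z (g v)) \<notin> C k \<and> (H gs n y (g v), H gs n z u) \<notin> C k) \<and>
   (\<forall>y u v. u \<in> cball p' r' \<longrightarrow> v \<in> cball p' r' \<longrightarrow>
       dist ((H gs n y \<circ> (if y n then g else id)) u) ((H gs n y \<circ> (if y n then g else id)) v) < (1/2)^n)"
proof -
  define Hs where "Hs = range (\<lambda>y. H gs n y)"
  have Hs: "finite Hs" "Hs \<subseteq> G" unfolding Hs_def using H_finite H_in gs by blast+
  define S where "S = Hs \<times> Hs \<times> (C ` {..n}) \<times> (UNIV :: bool set)"
  have S: "finite S" unfolding S_def using Hs by simp
  have S2: "\<And>f g C' sw. (f, g, C', sw) \<in> S \<Longrightarrow> f \<in> G \<and> g \<in> G \<and> split C'"
    unfolding S_def using Hs C by auto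
  have "p \<in> ball p r \<inter> Orb" using p by simp
  then have bo: "open (ball p r)" "ball p r \<inter> Orb \<noteq> {}" by (simp, blast)
  obtain A B where AB: "open A" "open B" "A \<subseteq> ball p r" "B \<subseteq> ball p r" "A \<inter> Orb \<noteq> {}" "B \<inter> Orb \<noteq> {}"
     "\<forall>f g C' sw. (f, g, C', sw) \<in> S \<longrightarrow> (\<forall>a\<in>A. \<forall>b\<in>B.
            (if sw then (f b, g a) else (f a, g b)) \<notin> C')"
  proof -
    have "\<exists>A' B'. open A' \<and> open B' \<and> A' \<subseteq> ball p r \<and> B' \<subseteq> ball p r \<and> A' \<inter> Orb \<noteq> {} \<and> B' \<inter> Orb \<noteq> {}
     \<and> (\<forall>f g C sw. (f, g, C, sw) \<in> S \<longrightarrow> (\<forall>a\<in>A'. \<forall>b\<in>B'.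
            (if sw then (f b, g a) else (f a, g b)) \<notin> C))"
      by (rule step_fin[OF S _ bo bo]) (rule S2)
    then show ?thesis by (elim exE conjE) (rule that)
  qed
  obtain a where a: "a \<in> A" "a \<in> Orb" using AB(5) by blast
  obtain b where b: "b \<in> B" "b \<in> Orb" using AB(6) by blast
  obtain g where g: "g \<in> G" "g a = b" using orb_trans[OF a(2) b(2)] by blast
  define Ob where "Ob = A \<inter> g -` B"
  have Ob: "open Ob" "a \<in> Ob" unfolding Ob_def using open_vimage[OF AB(2) cont[OF g(1)]] AB(1) a b g by auto
  obtain r0 where r0: "r0 > 0" "ball a r0 \<subseteq> Ob" using Ob open_contains_ball by blast
  define K where "K = (\<lambda>(h, c). h \<circ> (if c then g else id)) ` (Hs \<times> (UNIV :: bool set))"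
  have K: "finite K" "K \<subseteq> G" unfolding K_def using Hs g(1) comp_in by auto
  obtain d where d: "d > 0" "\<forall>k\<in>K. \<forall>u. dist u a < d \<longrightarrow> dist (k u) (k a) < (1/2)^n / 2"
    using unif_cont[OF K, of "(1/2)^n / 2" a] by auto
  define r' where "r' = min r0 d / 2"
  have r': "r' > 0" using r0 d unfolding r'_def by simp
  have cbO: "cball a r' \<subseteq> Ob"
  proof
    fix u assume "u \<in> cball a r'"
    then have "dist a u < r0" unfolding r'_def using r0 d by simp
    then show "u \<in> Ob" using r0 by auto
  qed
  have cbd: "\<And>u. u \<in> cball a r' \<Longrightarrow> dist u a < d"
    unfolding r'_def using r0 d by (simp add: dist_commute)
  show ?thesis
  proof (intro exI conjI allI impI)
    show "g \<in> G" "a \<in> Orb" "r' > 0" by fact+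
    show "cball a r' \<subseteq> ball p r" using cbO AB(3) unfolding Ob_def by blast
    show "g ` cball a r' \<subseteq> ball p r" using cbO AB(4) unfolding Ob_def by blast
  next
    fix y z k u v assume k: "k \<le> n" and u: "u \<in> cball a r'" and v: "v \<in> cball a r'"
    have uA: "u \<in> A" "g u \<in> B" using cbO u unfolding Ob_def by auto
    have vA: "v \<in> A" "g v \<in> B" using cbO v unfolding Ob_def by auto
    have m1: "(H gs n y, H gs n z, C k, False) \<in> S" "(H gs n y, H gs n z, C k, True) \<in> S"
      unfolding S_def Hs_def using k by auto
    show "(H gs n y u, H gs n z (g v)) \<notin> C k" using AB(7) m1(1) uA vA by fastforce
    show "(H gs n y (g v), H gs n z u) \<notin> C k" using AB(7) m1(2) uA vA by fastforce
  next
    fix y u v assume u: "u \<in> cball a r'" and v: "v \<in> cball a r'"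
    define k where "k = H gs n y \<circ> (if y n then g else id)"
    have "(H gs n y, y n) \<in> Hs \<times> (UNIV :: bool set)" unfolding Hs_def by simp
    then have "k \<in> K" unfolding K_def k_def
      by (rule rev_image_eqI) simp
    then have "dist (k u) (k a) < (1/2)^n / 2" "dist (k v) (k a) < (1/2)^n / 2"
      using d cbd u v by auto
    then have "dist (k u) (k v) < (1/2)^n" using dist_triangle2[of "k u" "k v" "k a"] by linarith
    then show "dist ((H gs n y \<circ> (if y n then g else id)) u) ((H gs n y \<circ> (if y n then g else id)) v) < (1/2)^n"
      unfolding k_def .
  qed
qed

end


locale cons = hgrp G Orb x0 for G :: "('a::polish_space \<Rightarrow> 'a) set" and Orb x0 +
  fixes Gs :: "nat \<Rightarrow> 'a \<Rightarrow> 'a" and p :: "nat \<Rightarrow> 'a" and r :: "nat \<Rightarrow> real"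
    and C :: "nat \<Rightarrow> ('a \<times> 'a) set"
  assumes a1: "\<And>k. Gs k \<in> G" and a2: "\<And>n. p n \<in> Orb" and a3: "\<And>n. r n > 0"
    and b1: "\<And>n. cball (p (Suc n)) (r (Suc n)) \<subseteq> ball (p n) (r n)"
    and b2: "\<And>n. Gs n ` cball (p (Suc n)) (r (Suc n)) \<subseteq> ball (p n) (r n)"
    and cc: "\<And>n y z k u v. k \<le> n \<Longrightarrow> u \<in> cball (p (Suc n)) (r (Suc n)) \<Longrightarrow> v \<in> cball (p (Suc n)) (r (Suc n)) \<Longrightarrow>
        (H Gs n y u, H Gs n z (Gs n v)) \<notin> C k \<and> (H Gs n y (Gs n v), H Gs n z u) \<notin> C k"
    and dd: "\<And>n y u v. u \<in> cball (p (Suc n)) (r (Suc n)) \<Longrightarrow> v \<in> cball (p (Suc n)) (r (Suc n)) \<Longrightarrow>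
        dist (H Gs (Suc n) y u) (H Gs (Suc n) y v) < (1/2)^n"
    and C0: "C 0 = Id"
begin

definition xs where "xs n y = H Gs n y (p n)"
definition phi where "phi y = lim (\<lambda>n. xs n y)"

lemma HG: "H Gs n y \<in> G" by (rule H_in) (rule a1)

lemma L1: "\<exists>t\<in>ball (p m) (r m). xs (m + d) y = H Gs m y t"
proof (induction d arbitrary: m)
  case 0
  have "p m \<in> ball (p m) (r m)" using a3[of m] by simp
  moreover have "xs (m + 0) y = H Gs m y (p m)" unfolding xs_def by simp
  ultimately show ?case by blast
next
  case (Suc d)
  obtain t' where t': "t' \<in> ball (p (Suc m)) (r (Suc m))" "xs (Suc m + d) y = H Gs (Suc m) y t'"
    using Suc.IH[of "Suc m"] by blast
  define t where "t = (if y m then Gs m t' else t')"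
  have t'c: "t' \<in> cball (p (Suc m)) (r (Suc m))" using t'(1) by simp
  have "t \<in> ball (p m) (r m)"
  proof (cases "y m")
    case True
    have "Gs m t' \<in> Gs m ` cball (p (Suc m)) (r (Suc m))" using t'c by (rule imageI)
    then show ?thesis unfolding t_def using b2[of m] True by (simp add: subset_iff)
  next
    case False then show ?thesis unfolding t_def using b1[of m] t'c by (simp add: subset_iff)
  qed
  moreover have "H Gs (Suc m) y t' = H Gs m y t" unfolding t_def by simp
  moreover have "m + Suc d = Suc m + d" by simp
  ultimately show ?case using t'(2) by metis
qed

lemma L1': assumes "m \<le> n" shows "xs n y \<in> H Gs m y ` cball (p m) (r m)"
proof -
  obtain t where t: "t \<in> ball (p m) (r m)" "xs (m + (n - m)) y = H Gs m y t" using L1 by blast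
  have "m + (n - m) = n" using assms by simp
  then have "xs n y = H Gs m y t" using t(2) by simp
  moreover have "t \<in> cball (p m) (r m)" using t(1) by simp
  ultimately show ?thesis by blast
qed

lemma cauchy: "Cauchy (\<lambda>n. xs n y)"
proof (rule metric_CauchyI)
  fix e :: real assume e: "0 < e"
  obtain m where m: "(1/2::real)^m < e" using real_arch_pow_inv[OF e, of "1/2"] by auto
  show "\<exists>M. \<forall>m\<ge>M. \<forall>n\<ge>M. dist (xs m y) (xs n y) < e"
  proof (intro exI[of _ "Suc m"] allI impI)
    fix n1 n2 assume n12: "Suc m \<le> n1" "Suc m \<le> n2"
    obtain u where u: "u \<in> cball (p (Suc m)) (r (Suc m))" "xs n1 y = H Gs (Suc m) y u"
      using L1'[OF n12(1), of y] by blast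
    obtain v where v: "v \<in> cball (p (Suc m)) (r (Suc m))" "xs n2 y = H Gs (Suc m) y v"
      using L1'[OF n12(2), of y] by blast
    have "dist (xs n1 y) (xs n2 y) < (1/2)^m" unfolding u(2) v(2) by (rule dd[OF u(1) v(1)])
    then show "dist (xs n1 y) (xs n2 y) < e" using m by linarith
  qed
qed

lemma conv: "(\<lambda>n. xs n y) \<longlonglongrightarrow> phi y"
proof -
  have "convergent (\<lambda>n. xs n y)" using cauchy by (rule Cauchy_convergent)
  then show ?thesis unfolding phi_def convergent_LIMSEQ_iff .
qed

lemma L3: "phi y \<in> H Gs m y ` cball (p m) (r m)"
proof (rule Lim_in_closed_set)
  show "closed (H Gs m y ` cball (p m) (r m))" by (rule closed_img[OF HG closed_cball])
  show "\<forall>\<^sub>F n in sequentially. xs n y \<in> H Gs m y ` cball (p m) (r m)"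
    unfolding eventually_sequentially by (intro exI[of _ m] allI impI L1')
  show "sequentially \<noteq> bot" by simp
  show "(\<lambda>n. xs n y) \<longlonglongrightarrow> phi y" by (rule conv)
qed

lemma L4: "\<exists>u\<in>cball (p (Suc n)) (r (Suc n)). phi y = H Gs n y (if y n then Gs n u else u)"
proof -
  obtain u where "u \<in> cball (p (Suc n)) (r (Suc n))" "phi y = H Gs (Suc n) y u" using L3[of y "Suc n"] by blast
  then show ?thesis by (intro bexI[of _ u]) auto
qed

lemma close: assumes "\<And>k. k < Suc m \<Longrightarrow> z k = y k" shows "dist (phi y) (phi z) < (1/2)^m"
proof -
  have HH: "H Gs (Suc m) z = H Gs (Suc m) y" by (rule H_cong) (auto simp: assms)
  obtain u where u: "u \<in> cball (p (Suc m)) (r (Suc m))" "phi y = H Gs (Suc m) y u" using L3[of y "Suc m"] by blast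
  obtain v where v: "v \<in> cball (p (Suc m)) (r (Suc m))" "phi z = H Gs (Suc m) z v" using L3[of z "Suc m"] by blast
  have zz: "phi z = H Gs (Suc m) y v" using v(2) HH by (simp del: H.simps)
  show ?thesis using dd[OF u(1) v(1), of y] u(2) zz by (simp del: H.simps)
qed

lemma contphi: "continuous_on UNIV phi"
  unfolding continuous_on_topological
proof (intro ballI allI impI)
  fix y :: "nat \<Rightarrow> bool" and B assume B: "open B" "phi y \<in> B"
  obtain e where e: "e > 0" "ball (phi y) e \<subseteq> B" using B open_contains_ball by blast
  obtain m where m: "(1/2::real)^m < e" using real_arch_pow_inv[OF e(1), of "1/2"] by auto
  define A where "A = (\<Inter>k\<in>{..<Suc m}. (\<lambda>z::nat\<Rightarrow>bool. z k) -` {y k})"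
  show "\<exists>A. open A \<and> y \<in> A \<and> (\<forall>z\<in>UNIV. z \<in> A \<longrightarrow> phi z \<in> B)"
  proof (intro exI conjI ballI impI)
    show "open A" unfolding A_def
      by (intro open_INT ballI finite_lessThan open_vimage[OF open_discrete continuous_on_product_coordinates])
    show "y \<in> A" unfolding A_def by simp
    fix z assume "z \<in> A"
    then have "\<And>k. k < Suc m \<Longrightarrow> z k = y k" unfolding A_def by auto
    then have "dist (phi y) (phi z) < (1/2)^m" by (rule close)
    then have "dist (phi y) (phi z) < e" using m by linarith
    then show "phi z \<in> B" using e(2) by auto
  qed
qed

lemma in_closure: "phi y \<in> closure Orb"
proof -
  have "\<forall>n. xs n y \<in> Orb" unfolding xs_def using orb_closed[OF HG a2] by blast
  moreover have "(\<lambda>n. xs n y) \<longlonglongrightarrow> phi y" by (rule conv)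
  ultimately show ?thesis unfolding closure_sequential by (intro exI[of _ "\<lambda>n. xs n y"] conjI)
qed

lemma E0part: assumes "E0 y z" shows "\<exists>g\<in>G. g (phi y) = phi z"
proof -
  obtain N where N: "\<And>m. m > N \<Longrightarrow> y m = z m" using assms unfolding E0_def by blast
  define n where "n = Suc N"
  obtain hy' where hy': "hy' \<in> G" "\<And>x. hy' (H Gs n y x) = x"
  proof (rule inv_props[OF HG[of n y]])
    fix g assume "g \<in> G" "\<And>x. g (H Gs n y x) = x"
    then show ?thesis by (rule that)
  qed
  define gg where "gg = H Gs n z \<circ> hy'"
  have gg: "gg \<in> G" unfolding gg_def by (rule comp_in[OF HG hy'(1)])
  have key: "H Gs m z = gg \<circ> H Gs m y" if "n \<le> m" for m
    using that
  proof (induction m rule: dec_induct)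
    case base
    show ?case unfolding gg_def using hy'(2) by (simp add: fun_eq_iff)
  next
    case (step m)
    have "y m = z m" using N step.hyps(1) unfolding n_def by simp
    then show ?case using step.IH by (simp add: comp_assoc)
  qed
  have ev: "\<forall>\<^sub>F m in sequentially. gg (xs m y) = xs m z"
    unfolding eventually_sequentially
  proof (intro exI[of _ n] allI impI)
    fix m assume "n \<le> m"
    then show "gg (xs m y) = xs m z" unfolding xs_def using key by simp
  qed
  have "(\<lambda>m. gg (xs m y)) \<longlonglongrightarrow> gg (phi y)"
    by (rule continuous_on_tendsto_compose[OF cont[OF gg] conv]) (simp_all add: eventually_True)
  then have "(\<lambda>m. xs m z) \<longlonglongrightarrow> gg (phi y)" by (rule Lim_transform_eventually) (rule ev)
  then have "gg (phi y) = phi z" by (rule LIMSEQ_unique) (rule conv)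
  then show ?thesis using gg by blast
qed

lemma nonE0: assumes "\<not> E0 y z" shows "(phi y, phi z) \<notin> C k"
proof -
  have "\<exists>m>k. y m \<noteq> z m"
  proof (rule ccontr)
    assume "\<not> (\<exists>m>k. y m \<noteq> z m)"
    then have "\<forall>m>k. y m = z m" by simp
    then have "E0 y z" unfolding E0_def by blast
    then show False using assms by simp
  qed
  then obtain n where n: "n > k" "y n \<noteq> z n" by blast
  obtain u where u: "u \<in> cball (p (Suc n)) (r (Suc n))" "phi y = H Gs n y (if y n then Gs n u else u)" using L4 by blast
  obtain v where v: "v \<in> cball (p (Suc n)) (r (Suc n))" "phi z = H Gs n z (if z n then Gs n v else v)" using L4 by blast
  have kn: "k \<le> n" using n by simp
  show ?thesis
  proof (cases "y n")
    case True
    then have "\<not> z n" using n by simp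
    then show ?thesis using cc[OF kn v(1) u(1), of y z] u(2) v(2) True by simp
  next
    case False
    then have "z n" using n by simp
    then show ?thesis using cc[OF kn u(1) v(1), of y z] u(2) v(2) False by simp
  qed
qed

lemma injphi: "inj phi"
proof (rule injI, rule ccontr)
  fix y z assume eq: "phi y = phi z" and ne: "y \<noteq> z"
  have "\<exists>k. y k \<noteq> z k" using ne by (simp add: fun_eq_iff)
  then obtain k where "y k \<noteq> z k" by blast
  define n where "n = (LEAST k. y k \<noteq> z k)"
  have n: "y n \<noteq> z n" unfolding n_def by (rule LeastI) fact
  have below: "\<And>k. k < n \<Longrightarrow> y k = z k" unfolding n_def using not_less_Least by blast
  have HH: "H Gs n z = H Gs n y" by (rule H_cong) (auto simp: below)
  obtain u where u: "u \<in> cball (p (Suc n)) (r (Suc n))" "phi y = H Gs n y (if y n then Gs n u else u)" using L4 by blast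
  obtain v where v: "v \<in> cball (p (Suc n)) (r (Suc n))" "phi z = H Gs n z (if z n then Gs n v else v)" using L4 by blast
  have kn: "0 \<le> n" by simp
  show False
  proof (cases "y n")
    case True
    then have "\<not> z n" using n by simp
    then show ?thesis using cc[OF kn v(1) u(1), of y z] u(2) v(2) True eq C0 by simp
  next
    case False
    then have "z n" using n by simp
    then show ?thesis using cc[OF kn u(1) v(1), of y z] u(2) v(2) False eq C0 by simp
  qed
qed

end


context hgrp begin

lemma construct:
  fixes C :: "nat \<Rightarrow> ('a \<times> 'a) set"
  assumes splC: "\<And>k. split (C k)" and C0: "C 0 = Id"
  shows "\<exists>\<phi> :: (nat \<Rightarrow> bool) \<Rightarrow> 'a. continuous_on UNIV \<phi> \<and> inj \<phi> \<and> \<phi> ` UNIV \<subseteq> closure Orb \<and>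
     (\<forall>y z. (E0 y z \<longrightarrow> (\<exists>g\<in>G. g (\<phi> y) = \<phi> z)) \<and> (\<not> E0 y z \<longrightarrow> (\<forall>k. (\<phi> y, \<phi> z) \<notin> C k)))"
proof -
  define P where "P = (\<lambda>n (x :: (nat \<Rightarrow> 'a \<Rightarrow> 'a) \<times> 'a \<times> real).
     (\<forall>k<n. fst x k \<in> G) \<and> fst (snd x) \<in> Orb \<and> snd (snd x) > 0)"
  define Q where "Q = (\<lambda>n (x :: (nat \<Rightarrow> 'a \<Rightarrow> 'a) \<times> 'a \<times> real) (x' :: (nat \<Rightarrow> 'a \<Rightarrow> 'a) \<times> 'a \<times> real).
     (\<forall>k<n. fst x' k = fst x k) \<and> fst x' n \<in> G \<and>
     cball (fst (snd x')) (snd (snd x')) \<subseteq> ball (fst (snd x)) (snd (snd x)) \<and>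
     fst x' n ` cball (fst (snd x')) (snd (snd x')) \<subseteq> ball (fst (snd x)) (snd (snd x)) \<and>
     (\<forall>y z k u v. k \<le> n \<longrightarrow> u \<in> cball (fst (snd x')) (snd (snd x')) \<longrightarrow> v \<in> cball (fst (snd x')) (snd (snd x')) \<longrightarrow>
       (H (fst x) n y u, H (fst x) n z (fst x' n v)) \<notin> C k \<and> (H (fst x) n y (fst x' n v), H (fst x) n z u) \<notin> C k) \<and>
     (\<forall>y u v. u \<in> cball (fst (snd x')) (snd (snd x')) \<longrightarrow> v \<in> cball (fst (snd x')) (snd (snd x')) \<longrightarrow>
       dist (H (fst x') (Suc n) y u) (H (fst x') (Suc n) y v) < (1/2)^n))"
  have x0O: "x0 \<in> Orb" unfolding orb using id_in by (rule rev_image_eqI) simp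
  have P0: "\<exists>x. P 0 x" unfolding P_def using x0O by (intro exI[of _ "(\<lambda>_. id, x0, 1)"]) simp
  have PS: "\<exists>x'. P (Suc n) x' \<and> Q n x x'" if Px: "P n x" for n x
  proof -
    have gs: "\<forall>k<n. fst x k \<in> G" and pO: "fst (snd x) \<in> Orb" and r: "snd (snd x) > 0"
      using Px unfolding P_def by auto
    obtain g p' r' where st: "g \<in> G" "p' \<in> Orb" "r' > 0" "cball p' r' \<subseteq> ball (fst (snd x)) (snd (snd x))"
      "g ` cball p' r' \<subseteq> ball (fst (snd x)) (snd (snd x))"
      "\<forall>y z k u v. k \<le> n \<longrightarrow> u \<in> cball p' r' \<longrightarrow> v \<in> cball p' r' \<longrightarrow>
       (H (fst x) n y u, H (fst x) n z (g v)) \<notin> C k \<and> (H (fst x) n y (g v), H (fst x) n z u) \<notin> C k"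
      "\<forall>y u v. u \<in> cball p' r' \<longrightarrow> v \<in> cball p' r' \<longrightarrow>
       dist ((H (fst x) n y \<circ> (if y n then g else id)) u) ((H (fst x) n y \<circ> (if y n then g else id)) v) < (1/2)^n"
      using stage[where n=n and gs="fst x" and C=C, OF gs pO r splC] by (elim exE conjE) (rule that)
    define gs' where "gs' = (fst x)(n := g)"
    have HH: "H gs' (Suc n) y = H (fst x) n y \<circ> (if y n then g else id)" for y
    proof -
      have "H gs' n y = H (fst x) n y" by (rule H_cong) (auto simp: gs'_def)
      then show ?thesis by (simp add: gs'_def)
    qed
    show ?thesis
    proof (intro exI[of _ "(gs', p', r')"] conjI)
      show "P (Suc n) (gs', p', r')" unfolding P_def using gs st(1-3) by (auto simp: gs'_def less_Suc_eq)
      show "Q n x (gs', p', r')" unfolding Q_def using st HH by (simp add: gs'_def)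
    qed
  qed
  obtain f where f: "\<And>n. P n (f n)" "\<And>n. Q n (f n) (f (Suc n))"
    using dependent_nat_choice[of P Q, OF P0 PS] by blast
  define Gs where "Gs = (\<lambda>k. fst (f (Suc k)) k)"
  define pp where "pp = (\<lambda>n. fst (snd (f n)))"
  define rr where "rr = (\<lambda>n. snd (snd (f n)))"
  have agree: "\<forall>k<n. fst (f n) k = Gs k" for n
  proof (induction n)
    case 0 then show ?case by simp
  next
    case (Suc n)
    have "\<forall>k<n. fst (f (Suc n)) k = fst (f n) k" using f(2)[of n] unfolding Q_def by simp
    then show ?case using Suc unfolding Gs_def by (auto simp: less_Suc_eq)
  qed
  have Hn: "H (fst (f n)) n y = H Gs n y" for n y by (rule H_cong) (auto simp: agree)
  have HSn: "H (fst (f (Suc n))) (Suc n) y = H Gs (Suc n) y" for n y by (rule H_cong) (auto simp: agree)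
  have A1: "\<And>k. Gs k \<in> G" using f(2) unfolding Q_def Gs_def by simp
  have A2: "\<And>n. pp n \<in> Orb" using f(1) unfolding P_def pp_def by simp
  have A3: "\<And>n. rr n > 0" using f(1) unfolding P_def rr_def by simp
  have B1: "\<And>n. cball (pp (Suc n)) (rr (Suc n)) \<subseteq> ball (pp n) (rr n)"
    using f(2) unfolding Q_def pp_def rr_def by simp
  have B2: "\<And>n. Gs n ` cball (pp (Suc n)) (rr (Suc n)) \<subseteq> ball (pp n) (rr n)"
    using f(2) unfolding Q_def pp_def rr_def Gs_def by simp
  have CC: "\<And>n y z k u v. k \<le> n \<Longrightarrow> u \<in> cball (pp (Suc n)) (rr (Suc n)) \<Longrightarrow> v \<in> cball (pp (Suc n)) (rr (Suc n)) \<Longrightarrow>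
        (H Gs n y u, H Gs n z (Gs n v)) \<notin> C k \<and> (H Gs n y (Gs n v), H Gs n z u) \<notin> C k"
  proof -
    fix n y z k u v assume "k \<le> n" "u \<in> cball (pp (Suc n)) (rr (Suc n))" "v \<in> cball (pp (Suc n)) (rr (Suc n))"
    then show "(H Gs n y u, H Gs n z (Gs n v)) \<notin> C k \<and> (H Gs n y (Gs n v), H Gs n z u) \<notin> C k"
      using f(2)[of n] unfolding Q_def pp_def rr_def Gs_def Hn by blast
  qed
  have DD: "\<And>n y u v. u \<in> cball (pp (Suc n)) (rr (Suc n)) \<Longrightarrow> v \<in> cball (pp (Suc n)) (rr (Suc n)) \<Longrightarrow>
        dist (H Gs (Suc n) y u) (H Gs (Suc n) y v) < (1/2)^n"
  proof -
    fix n y u v assume "u \<in> cball (pp (Suc n)) (rr (Suc n))" "v \<in> cball (pp (Suc n)) (rr (Suc n))"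
    then show "dist (H Gs (Suc n) y u) (H Gs (Suc n) y v) < (1/2)^n"
      using f(2)[of n] unfolding Q_def pp_def rr_def HSn[symmetric] by blast
  qed
  interpret c: cons G Orb x0 Gs pp rr C
    apply unfold_locales
    apply (fact A1)
    apply (fact A2)
    apply (fact A3)
    apply (fact B1)
    apply (fact B2)
    apply (fact CC)
    apply (fact DD)
    apply (fact C0)
    done
  show ?thesis
  proof (intro exI[of _ c.phi] conjI allI impI)
    show "continuous_on UNIV c.phi" by (rule c.contphi)
    show "inj c.phi" by (rule c.injphi)
    show "range c.phi \<subseteq> closure Orb" using c.in_closure by blast
    fix y z
    show "E0 y z \<Longrightarrow> \<exists>g\<in>G. g (c.phi y) = c.phi z" by (rule c.E0part)
    fix k
    show "\<not> E0 y z \<Longrightarrow> (c.phi y, c.phi z) \<notin> C k" by (rule c.nonE0)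
  qed
qed

end

theorem theorem2p2:
  fixes R :: "nat \<Rightarrow> ('a::polish_space \<times> 'a) set"
    and G :: "('a \<Rightarrow> 'a) set"
    and Orb :: "'a set"
  assumes Fsig: "\<And>n. fsigma_in euclidean (R n)"
    and grp: "homeo_group G"
    and orbit: "\<exists>x0. Orb = (\<lambda>g. g x0) ` G"
    and hyp: "\<And>n U. open U \<Longrightarrow> U \<inter> Orb \<noteq> {} \<Longrightarrow>
               \<exists>x y. x \<noteq> y \<and> x \<in> Orb \<inter> U \<and> y \<in> Orb \<inter> U \<and>
                     Orb \<inter> (R n `` {x}) \<inter> (R n `` {y}) = {}"
  shows "\<exists>\<phi> :: (nat \<Rightarrow> bool) \<Rightarrow> 'a.
           continuous_on UNIV \<phi> \<and> inj \<phi> \<and> \<phi> ` UNIV \<subseteq> closure Orb \<and>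
           (\<forall>y z. (E0 y z \<longrightarrow> (\<exists>g\<in>G. g (\<phi> y) = \<phi> z)) \<and>
                  (\<not> E0 y z \<longrightarrow> (\<phi> y, \<phi> z) \<notin> (\<Union>n. R n)))"
proof -
  obtain x0 where orbx: "Orb = (\<lambda>g. g x0) ` G" using orbit by blast
  interpret hg: hgrp G Orb x0 by unfold_locales (rule grp, rule orbx)
  have "\<exists>F :: nat \<Rightarrow> ('a \<times> 'a) set. (\<forall>j. closed (F j)) \<and> \<Union> (range F) = R n" for n
  proof -
    obtain D where D: "\<forall>j. closedin euclidean (D j)" "\<forall>j. D j \<subseteq> D (Suc j)" "\<Union> (range D) = R n"
      using fsigma_in_ascending[THEN iffD1, OF Fsig[of n]] by (elim exE conjE) (rule that)
    have "\<forall>j. closed (D j)" unfolding closed_closedin using D(1) by blast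
    then show ?thesis using D(3) by (intro exI[of _ D] conjI)
  qed
  then have "\<forall>n. \<exists>F :: nat \<Rightarrow> ('a \<times> 'a) set. (\<forall>j. closed (F j)) \<and> \<Union> (range F) = R n" by blast
  then have "\<exists>F :: nat \<Rightarrow> nat \<Rightarrow> ('a \<times> 'a) set. \<forall>n. (\<forall>j. closed (F n j)) \<and> \<Union> (range (F n)) = R n" by (rule choice)
  then obtain F :: "nat \<Rightarrow> nat \<Rightarrow> ('a \<times> 'a) set" where F0: "\<forall>n. (\<forall>j. closed (F n j)) \<and> \<Union> (range (F n)) = R n" by (elim exE)
  have F: "\<And>n j. closed (F n j)" "\<And>n. \<Union> (range (F n)) = R n" using F0 by simp_all
  define C where "C = (\<lambda>k. if k = 0 then Id else F (fst (prod_decode (k - 1))) (snd (prod_decode (k - 1))))"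
  have C0: "C 0 = Id" unfolding C_def by simp
  have splC: "hg.split (C k)" for k
  proof (cases "k = 0")
    case True
    have cl: "closed (C k)" unfolding C_def True Id_def by (simp add: closed_diagonal)
    show ?thesis unfolding hg.split_def
    proof (intro conjI cl allI impI)
      fix U :: "'a set" assume U: "open U" "U \<inter> Orb \<noteq> {}"
      obtain x y where xy: "x \<noteq> y" "x \<in> Orb \<inter> U" "y \<in> Orb \<inter> U" using hyp[OF U, of 0] by blast
      have "C k `` {x} = {x}" "C k `` {y} = {y}" unfolding C_def True by auto
      then have "Orb \<inter> C k `` {x} \<inter> C k `` {y} = {}" using xy(1) by simp
      then show "\<exists>x y. x \<in> Orb \<inter> U \<and> y \<in> Orb \<inter> U \<and> Orb \<inter> C k `` {x} \<inter> C k `` {y} = {}"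
        using xy by blast
    qed
  next
    case False
    define n where "n = fst (prod_decode (k - 1))"
    define j where "j = snd (prod_decode (k - 1))"
    have Ck: "C k = F n j" unfolding C_def n_def j_def using False by simp
    have sub: "C k \<subseteq> R n" unfolding Ck using F(2)[of n] by blast
    show ?thesis unfolding hg.split_def
    proof (intro conjI allI impI)
      show "closed (C k)" unfolding Ck by (rule F(1))
      fix U :: "'a set" assume U: "open U" "U \<inter> Orb \<noteq> {}"
      obtain x y where xy: "x \<in> Orb \<inter> U" "y \<in> Orb \<inter> U" "Orb \<inter> (R n `` {x}) \<inter> (R n `` {y}) = {}"
        using hyp[OF U, of n] by blast
      have "Orb \<inter> C k `` {x} \<inter> C k `` {y} \<subseteq> Orb \<inter> (R n `` {x}) \<inter> (R n `` {y})" using sub by blast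
      then have "Orb \<inter> C k `` {x} \<inter> C k `` {y} = {}" using xy(3) by blast
      then show "\<exists>x y. x \<in> Orb \<inter> U \<and> y \<in> Orb \<inter> U \<and> Orb \<inter> C k `` {x} \<inter> C k `` {y} = {}"
        using xy(1,2) by blast
    qed
  qed
  obtain \<phi> :: "(nat \<Rightarrow> bool) \<Rightarrow> 'a" where ph: "continuous_on UNIV \<phi>" "inj \<phi>" "\<phi> ` UNIV \<subseteq> closure Orb"
     "\<forall>y z. (E0 y z \<longrightarrow> (\<exists>g\<in>G. g (\<phi> y) = \<phi> z)) \<and> (\<not> E0 y z \<longrightarrow> (\<forall>k. (\<phi> y, \<phi> z) \<notin> C k))"
    using hg.construct[where C=C, OF splC C0] by (elim exE conjE) (rule that)
  have notR: "(\<phi> y, \<phi> z) \<notin> (\<Union>n. R n)" if ne: "\<not> E0 y z" for y z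
  proof
    assume "(\<phi> y, \<phi> z) \<in> (\<Union>n. R n)"
    then obtain n where "(\<phi> y, \<phi> z) \<in> R n" by blast
    then obtain j where j: "(\<phi> y, \<phi> z) \<in> F n j" using F(2)[of n] by blast
    have "C (Suc (prod_encode (n, j))) = F n j" unfolding C_def by simp
    then have "(\<phi> y, \<phi> z) \<in> C (Suc (prod_encode (n, j)))" using j by simp
    moreover have "\<forall>k. (\<phi> y, \<phi> z) \<notin> C k" using ph(4) ne by simp
    ultimately show False by blast
  qed
  show ?thesis
  proof (intro exI[of _ \<phi>] conjI allI impI)
    fix y z
    show "E0 y z \<Longrightarrow> \<exists>g\<in>G. g (\<phi> y) = \<phi> z" using ph(4) by blast
    show "\<not> E0 y z \<Longrightarrow> (\<phi> y, \<phi> z) \<notin> (\<Union>n. R n)" by (rule notR)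
  qed (fact ph)+
qed

end
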